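(* There exists a constant $\delta>0$ depending on the modulus of convexity $m$ of $u$ such that $B_\delta(0)\subset \mathcal{P}(B_R)$. Explicitly, one may take $\delta = \min\left\{ \frac{m_0}{2|Du|_{\partial B_R}},\ \frac{m_0}{2R}\right\}$, where $m_0:=\inf_{\partial B_R}u \geq m(R)$.
   Context: Let $u\in C^4(B_R(0))$ be a convex solution of the Monge-Ampère equation $\det D^2u = f$ in $B_R(0)\subset\mathbb{R}^2$, with $u(0)=0$, $Du(0)=0$, and $0<C_0^{-1}\leq f\leq C_0$. In dimension two such a solution is strictly convex (Aleksandrov, Heinz). Define the injective map $\mathcal{P}: B_R\to\mathbb{R}^2$ by $\mathcal{P}(x)=(u_{x_1}(x), x_2)$ (the coordinate change associated with the partial Legendre transform $u^*(y_1,y_2)=\sup_{x_1}\{x_1y_1-u(x_1,y_2)\}$ in the $e_1$-direction). The modulus of convexity of $u$ is $m(t)=\inf\{u(x)-\ell_z(x): |x-z|>t\}$ for $t>0$, where $\ell_z$ is the supporting function of $u$ at $z$; $m$ is positive by strict convexity. $|Du|_{\partial B_R}$ denotes $\sup_{\partial B_R}|Du|$. *)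

theory Defs
  imports "HOL-Analysis.Analysis"
begin

definition pderiv2 :: "2 \<Rightarrow> (real^2 \<Rightarrow> real) \<Rightarrow> real^2 \<Rightarrow> real" where
  "pderiv2 i g x = frechet_derivative g (at x) (axis i 1)"

fun Ck :: "nat \<Rightarrow> (real^2) set \<Rightarrow> (real^2 \<Rightarrow> real) \<Rightarrow> bool" where
  "Ck 0 S g = continuous_on S g"
| "Ck (Suc k) S g = (continuous_on S g \<and> (\<forall>x\<in>S. g differentiable (at x))
      \<and> (\<forall>i. Ck k S (pderiv2 i g)))"

definition hess2 :: "(real^2 \<Rightarrow> real) \<Rightarrow> real^2 \<Rightarrow> real^2^2" where
  "hess2 g x = (\<chi> i j. pderiv2 j (pderiv2 i g) x)"

text \<open>The map P(x) = (u_{x_1}(x), x_2), with Du the gradient of u.\<close>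
definition Pmap :: "(real^2 \<Rightarrow> real^2) \<Rightarrow> real^2 \<Rightarrow> real^2" where
  "Pmap Du x = (\<chi> i. if i = 1 then Du x $ 1 else x $ 2)"

end

theory Submission
  imports Defs
begin


lemma convex_cball_ext:
  fixes u :: "real^2 \<Rightarrow> real"
  assumes R: "R > 0" and cvx: "convex_on (ball 0 R) u" and cont: "continuous_on (cball 0 R) u"
  shows "convex_on (cball 0 R) u"
proof (rule convex_onI)
  show "convex (cball (0::real^2) R)" by simp
  fix t :: real and x y assume t: "t > 0" "t < 1" and x: "x \<in> cball (0::real^2) R" and y: "y \<in> cball (0::real^2) R"
  define F where "F s = u (s *\<^sub>R ((1 - t) *\<^sub>R x + t *\<^sub>R y)) - (1 - t) * u (s *\<^sub>R x) - t * u (s *\<^sub>R y)" for s :: real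
  have sc: "s *\<^sub>R v \<in> cball 0 R" if "v \<in> cball (0::real^2) R" "s \<in> {0..1}" for v s
  proof -
    have "norm (s *\<^sub>R v) = s * norm v" using that by simp
    also have "\<dots> \<le> 1 * R" using that by (intro mult_mono) auto
    finally show ?thesis by simp
  qed
  have sb: "s *\<^sub>R v \<in> ball 0 R" if "v \<in> cball (0::real^2) R" "s \<in> {0..<1}" for v s
  proof -
    have "norm (s *\<^sub>R v) = s * norm v" using that by simp
    also have "\<dots> \<le> s * R" using that by (intro mult_left_mono) auto
    also have "\<dots> < R" using that R by auto
    finally show ?thesis by simp
  qed
  have xy: "(1 - t) *\<^sub>R x + t *\<^sub>R y \<in> cball 0 R"
    using convex_cball[of "0::real^2" R] x y t unfolding convex_alt by auto
  have cF: "continuous_on {0..1} F"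
    unfolding F_def
    by (intro continuous_intros continuous_on_compose2[OF cont] sc[OF x] sc[OF y] sc[OF xy]; auto intro: sc x y xy)
  have le: "F s \<le> 0" if "s \<in> {0<..<1}" for s
  proof -
    have "u ((1 - t) *\<^sub>R (s *\<^sub>R x) + t *\<^sub>R (s *\<^sub>R y)) \<le> (1 - t) * u (s *\<^sub>R x) + t * u (s *\<^sub>R y)"
      using convex_onD[OF cvx, of t "s *\<^sub>R x" "s *\<^sub>R y"] t sb[OF x] sb[OF y] that by auto
    moreover have "(1 - t) *\<^sub>R (s *\<^sub>R x) + t *\<^sub>R (s *\<^sub>R y) = s *\<^sub>R ((1 - t) *\<^sub>R x + t *\<^sub>R y)"
      by (simp add: algebra_simps)
    ultimately show ?thesis unfolding F_def by simp
  qed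
  have "(F \<longlongrightarrow> F 1) (at_left 1)"
    using cF unfolding continuous_on_def by (metis at_within_Icc_at_left atLeastAtMost_iff zero_less_one order_refl zero_le_one)
  moreover have "eventually (\<lambda>s. F s \<le> 0) (at_left (1::real))"
    using eventually_at_left_real[of 0 1] by (auto elim!: eventually_mono intro: le)
  ultimately have "F 1 \<le> 0"
    by (intro tendsto_upperbound) (auto simp: trivial_limit_at_left_real)
  then show "u ((1 - t) *\<^sub>R x + t *\<^sub>R y) \<le> (1 - t) * u x + t * u y" unfolding F_def by simp
qed


lemma tangent_cball:
  fixes u :: "real^2 \<Rightarrow> real" and Du :: "real^2 \<Rightarrow> real^2"
  assumes cvx: "convex_on (cball 0 R) u"
    and Du: "\<And>x. x \<in> cball 0 R \<Longrightarrow> (u has_derivative (\<lambda>h. Du x \<bullet> h)) (at x within cball 0 R)"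
    and z: "z \<in> cball 0 R" and w: "w \<in> cball 0 R"
  shows "u z + Du z \<bullet> (w - z) \<le> u w"
proof -
  define l where "l t = z + t *\<^sub>R (w - z)" for t :: real
  have lin: "l t \<in> cball 0 R" if "t \<in> {0..1}" for t
  proof -
    have "l t = (1 - t) *\<^sub>R z + t *\<^sub>R w" unfolding l_def by (simp add: algebra_simps)
    then show ?thesis using convex_cball[of "0::real^2" R] z w that unfolding convex_alt by auto
  qed
  have dl: "(l has_derivative (\<lambda>t. t *\<^sub>R (w - z))) (at 0 within {0..1})"
    unfolding l_def by (auto intro!: derivative_eq_intros)
  have "((\<lambda>t. u (l t)) has_derivative (\<lambda>t. Du (l 0) \<bullet> (t *\<^sub>R (w - z)))) (at 0 within {0..1})"
    by (rule has_derivative_in_compose2[OF Du _ _ dl]) (use lin in auto)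
  then have "((\<lambda>t. u (l t)) has_field_derivative (Du z \<bullet> (w - z))) (at 0 within {0..1})"
    unfolding has_field_derivative_def l_def by (simp add: mult.commute[of _ "Du z \<bullet> (w - z)"])
  then have lim: "((\<lambda>t. (u (l t) - u (l 0)) / (t - 0)) \<longlongrightarrow> Du z \<bullet> (w - z)) (at_right 0)"
    unfolding has_field_derivative_iff by (simp add: at_within_Icc_at_right)
  have ev: "eventually (\<lambda>t. (u (l t) - u (l 0)) / (t - 0) \<le> u w - u z) (at_right (0::real))"
    using eventually_at_right_real[OF zero_less_one]
  proof (rule eventually_mono)
    fix t :: real assume t: "t \<in> {0<..<1}"
    have "u (l t) \<le> (1 - t) * u z + t * u w"
      using convex_onD[OF cvx, of t z w] t z w unfolding l_def by (simp add: algebra_simps)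
    then have "u (l t) - u (l 0) \<le> t * (u w - u z)" unfolding l_def by (simp add: algebra_simps)
    then show "(u (l t) - u (l 0)) / (t - 0) \<le> u w - u z" using t by (simp add: divide_simps mult.commute)
  qed
  have "Du z \<bullet> (w - z) \<le> u w - u z"
    by (rule tendsto_upperbound[OF lim ev]) (simp add: trivial_limit_at_right_real)
  then show ?thesis by simp
qed


lemma pderiv_Du:
  fixes u :: "real^2 \<Rightarrow> real" and Du :: "real^2 \<Rightarrow> real^2"
  assumes Du: "\<And>x. x \<in> cball 0 R \<Longrightarrow> (u has_derivative (\<lambda>h. Du x \<bullet> h)) (at x within cball 0 R)"
    and x: "x \<in> ball 0 R"
  shows "(u has_derivative (\<lambda>h. Du x \<bullet> h)) (at x)" "pderiv2 i u x = Du x $ i"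
proof -
  have "at x within cball 0 R = at x"
    by (rule at_within_interior) (use x in simp)
  then show d: "(u has_derivative (\<lambda>h. Du x \<bullet> h)) (at x)" using Du[of x] x by simp
  show "pderiv2 i u x = Du x $ i"
    unfolding pderiv2_def using frechet_derivative_at[OF d, symmetric] by (simp add: inner_axis)
qed

lemma Ck4_diff:
  assumes "Ck 4 S u" "x \<in> S"
  shows "pderiv2 i u differentiable (at x)"
  using assms by (simp add: numeral_eq_Suc)

lemma hess_kernel:
  fixes u :: "real^2 \<Rightarrow> real" and Du :: "real^2 \<Rightarrow> real^2"
  assumes C4: "Ck 4 (ball 0 R) u"
    and Du: "\<And>x. x \<in> cball 0 R \<Longrightarrow> (u has_derivative (\<lambda>h. Du x \<bullet> h)) (at x within cball 0 R)"
    and z: "z \<in> ball 0 R" and v: "v \<noteq> 0" and e: "e > 0"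
    and line: "\<And>s. \<bar>s\<bar> < e \<Longrightarrow> z + s *\<^sub>R v \<in> ball 0 R \<and> Du (z + s *\<^sub>R v) = 0"
  shows "det (hess2 u z) = 0"
proof -
  have Dz: "frechet_derivative (pderiv2 i u) (at z) v = 0" for i
  proof -
    let ?w = "pderiv2 i u"
    let ?D = "frechet_derivative ?w (at z)"
    have dw: "(?w has_derivative ?D) (at z)"
      using Ck4_diff[OF C4 z] frechet_derivative_works by blast
    have "((\<lambda>s. ?w (z + s *\<^sub>R v)) has_derivative (\<lambda>s. ?D (s *\<^sub>R v))) (at 0)"
    proof -
      have "((\<lambda>s::real. z + s *\<^sub>R v) has_derivative (\<lambda>s. s *\<^sub>R v)) (at 0)"
        by (auto intro!: derivative_eq_intros)
      from has_derivative_compose[OF this] dw show ?thesis by simp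
    qed
    moreover have "eventually (\<lambda>s. ?w (z + 0 *\<^sub>R v) \<le> ?w (z + s *\<^sub>R v)) (at (0::real))"
    proof -
      have "eventually (\<lambda>s::real. s \<in> ball 0 e) (at 0)"
        by (rule eventually_at_in_open') (use e in auto)
      then show ?thesis
      proof (rule eventually_mono)
        fix s :: real assume "s \<in> ball 0 e"
        then have s: "\<bar>s\<bar> < e" by simp
        have "?w (z + s *\<^sub>R v) = Du (z + s *\<^sub>R v) $ i"
          using pderiv_Du(2)[OF Du] line[OF s] by blast
        moreover have "?w (z + 0 *\<^sub>R v) = Du (z + 0 *\<^sub>R v) $ i"
          using pderiv_Du(2)[OF Du] line[of 0] e by simp
        ultimately show "?w (z + 0 *\<^sub>R v) \<le> ?w (z + s *\<^sub>R v)"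
          using line[OF s] line[of 0] e by simp
      qed
    qed
    ultimately have "(\<lambda>s. ?D (s *\<^sub>R v)) = (\<lambda>h. 0)"
      by (intro has_derivative_local_min) auto
    then show ?thesis by (metis scaleR_one)
  qed
  have lin: "linear (frechet_derivative (pderiv2 i u) (at z))" for i
    using Ck4_diff[OF C4 z] frechet_derivative_works has_derivative_linear by blast
  have vdec: "v = (v $ 1) *\<^sub>R axis 1 1 + (v $ 2) *\<^sub>R axis 2 1"
    by (simp add: vec_eq_iff forall_2 axis_def)
  have "hess2 u z *v v = 0"
  proof (subst vec_eq_iff, intro allI)
    fix i :: 2
    have "(hess2 u z *v v) $ i = frechet_derivative (pderiv2 i u) (at z) (axis 1 1) * v $ 1
        + frechet_derivative (pderiv2 i u) (at z) (axis 2 1) * v $ 2"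
      by (simp add: hess2_def matrix_vector_mult_def sum_2 pderiv2_def[of 1] pderiv2_def[of 2])
    also have "\<dots> = frechet_derivative (pderiv2 i u) (at z) v"
      by (subst (3) vdec) (simp add: linear_add[OF lin] linear_scale[OF lin] mult.commute)
    also have "\<dots> = 0" by (rule Dz)
    finally show "(hess2 u z *v v) $ i = 0 $ i" by simp
  qed
  then have "\<not> invertible (hess2 u z)"
    using v matrix_left_invertible_ker unfolding invertible_def by blast
  then show ?thesis using invertible_det_nz by blast
qed


lemma abs_less_sq: "\<bar>x\<bar> < \<bar>y\<bar> \<longleftrightarrow> x\<^sup>2 < (y::real)\<^sup>2"
  by (metis abs_le_square_iff not_le)

theorem lemma2p1:
  fixes u :: "real^2 \<Rightarrow> real" and Du :: "real^2 \<Rightarrow> real^2"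
    and f :: "real^2 \<Rightarrow> real" and R C0 :: real
  assumes R: "R > 0"
    and C4: "Ck 4 (ball 0 R) u"
    and Du: "\<And>x. x \<in> cball 0 R \<Longrightarrow> (u has_derivative (\<lambda>h. Du x \<bullet> h)) (at x within cball 0 R)"
    and Du_cont: "continuous_on (cball 0 R) Du"
    and cvx: "convex_on (ball 0 R) u"
    and MA: "\<And>x. x \<in> ball 0 R \<Longrightarrow> det (hess2 u x) = f x"
    and f_bounds: "0 < inverse C0" "\<And>x. x \<in> ball 0 R \<Longrightarrow> inverse C0 \<le> f x \<and> f x \<le> C0"
    and u0: "u 0 = 0" and Du0: "Du 0 = 0"
  shows "let m0 = Inf (u ` sphere 0 R);
             M = Sup ((\<lambda>x. norm (Du x)) ` sphere 0 R);
             \<delta> = min (m0 / (2 * M)) (m0 / (2 * R))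
         in \<delta> > 0 \<and> ball 0 \<delta> \<subseteq> Pmap Du ` ball 0 R"
proof -
  define m0 where "m0 = Inf (u ` sphere 0 R)"
  define M where "M = Sup ((\<lambda>x. norm (Du x)) ` sphere 0 R)"
  define \<delta> where "\<delta> = min (m0 / (2 * M)) (m0 / (2 * R))"
  have contu: "continuous_on (cball 0 R) u"
    using Du has_derivative_continuous continuous_on_eq_continuous_within by blast
  have cvxc: "convex_on (cball 0 R) u" by (rule convex_cball_ext[OF R cvx contu])
  note tan = tangent_cball[OF cvxc Du]
  have unn: "0 \<le> u x" if "x \<in> cball 0 R" for x
    using tan[of 0 x] that R by (simp add: u0 Du0)
  have sph_sub: "sphere (0::real^2) R \<subseteq> cball 0 R" by auto
  have p0: "R *\<^sub>R axis 1 1 \<in> sphere (0::real^2) R" using R by simp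
  obtain x0 where x0: "x0 \<in> sphere 0 R" and x0min: "\<And>x. x \<in> sphere 0 R \<Longrightarrow> u x0 \<le> u x"
    using continuous_attains_inf[OF compact_sphere _ continuous_on_subset[OF contu sph_sub]] p0 by blast
  have m0eq: "m0 = u x0" unfolding m0_def
    by (rule cInf_eq_minimum) (use x0 x0min in auto)
  have m0le: "m0 \<le> u x" if "x \<in> sphere 0 R" for x using x0min that m0eq by simp
  have m0pos: "m0 > 0"
  proof (rule ccontr)
    assume "\<not> m0 > 0"
    then have ux0: "u x0 = 0" using unn[of x0] x0 m0eq by auto
    have useg: "u (s *\<^sub>R x0) = 0" if "s \<in> {0..1}" for s
    proof -
      have "u ((1 - s) *\<^sub>R 0 + s *\<^sub>R x0) \<le> (1 - s) * u 0 + s * u x0"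
        using convex_onD[OF cvxc, of s 0 x0] that x0 R by auto
      then have "u (s *\<^sub>R x0) \<le> 0" by (simp add: u0 ux0)
      moreover have "s *\<^sub>R x0 \<in> cball 0 R" using that x0 by (auto intro: mult_left_le_one_le)
      ultimately show ?thesis using unn[of "s *\<^sub>R x0"] by linarith
    qed
    define z where "z = (1/2) *\<^sub>R x0"
    have line: "z + s *\<^sub>R x0 \<in> ball 0 R \<and> Du (z + s *\<^sub>R x0) = 0" if s: "\<bar>s\<bar> < 1/2" for s
    proof -
      have eq: "z + s *\<^sub>R x0 = (1/2 + s) *\<^sub>R x0" unfolding z_def by (simp add: algebra_simps)
      have nb: "norm (z + s *\<^sub>R x0) = (1/2 + s) * R" using x0 s by (simp add: eq)
      have inb: "z + s *\<^sub>R x0 \<in> ball 0 R" using nb s R by simp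
      let ?y = "z + s *\<^sub>R x0"
      have "1/2 + s \<in> {0..1}" using s unfolding atLeastAtMost_iff abs_less_iff by linarith
      then have uy: "u ?y = 0" using useg[of "1/2 + s"] eq by simp
      have "eventually (\<lambda>x. x \<in> ball 0 R) (at ?y)"
        by (rule eventually_at_in_open') (use inb in auto)
      then have "eventually (\<lambda>x. u ?y \<le> u x) (at ?y)"
        by (rule eventually_mono) (use unn uy in auto)
      then have "(\<lambda>h. Du ?y \<bullet> h) = (\<lambda>h. 0)"
        using has_derivative_local_min pderiv_Du(1)[OF Du inb] by blast
      then have "Du ?y \<bullet> Du ?y = 0" by metis
      then show ?thesis using inb by simp
    qed
    have zb: "z \<in> ball 0 R" using line[of 0] by simp
    have "x0 \<noteq> 0" using x0 R by auto
    then have "det (hess2 u z) = 0"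
      using hess_kernel[OF C4 Du zb _ _ line, of "1/2"] by simp
    then show False using MA[OF zb] f_bounds(2)[OF zb] f_bounds(1) by simp
  qed
  have bddM: "bdd_above ((\<lambda>x. norm (Du x)) ` sphere 0 R)"
    by (intro bounded_imp_bdd_above compact_imp_bounded compact_continuous_image
        continuous_on_norm continuous_on_subset[OF Du_cont sph_sub] compact_sphere)
  have Mb: "norm (Du x) \<le> M" if "x \<in> sphere 0 R" for x
    unfolding M_def by (rule cSup_upper) (use that bddM in auto)
  have uMR: "u p \<le> M * R" if p: "p \<in> sphere 0 R" for p
  proof -
    have "u p + Du p \<bullet> (0 - p) \<le> u 0" using tan[of p 0] p R by auto
    then have "u p \<le> Du p \<bullet> p" by (simp add: u0)
    also have "\<dots> \<le> norm (Du p) * norm p" by (rule norm_cauchy_schwarz)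
    also have "\<dots> \<le> M * R" using Mb[OF p] p R by (simp add: mult_right_mono)
    finally show ?thesis .
  qed
  have Mpos: "M > 0"
    using m0le[OF p0] uMR[OF p0] m0pos R by (metis mult_pos_pos not_le order_trans mult_nonpos_nonneg less_imp_le)
  have dpos: "\<delta> > 0" unfolding \<delta>_def using m0pos Mpos R by simp
  have dR: "\<delta> \<le> R / 2"
  proof -
    have "m0 \<le> M * R" using m0le[OF p0] uMR[OF p0] by simp
    then have "m0 / (2 * M) \<le> R / 2" using Mpos by (simp add: divide_simps mult.commute)
    then show ?thesis unfolding \<delta>_def by simp
  qed
  have sub: "ball 0 \<delta> \<subseteq> Pmap Du ` ball 0 R"
  proof
    fix y :: "real^2" assume y: "y \<in> ball 0 \<delta>"
    have y1: "\<bar>y $ 1\<bar> < \<delta>" and y2: "\<bar>y $ 2\<bar> < \<delta>"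
      using y component_le_norm_cart[of y] by (auto intro: le_less_trans)
    define L where "L t = t *\<^sub>R axis (1::2) 1 + (y $ 2) *\<^sub>R axis (2::2) (1::real)" for t
    have L1: "L t $ 1 = t" and L2: "L t $ 2 = y $ 2" for t unfolding L_def by (simp_all add: axis_def)
    have nL: "norm (L t) ^ 2 = t ^ 2 + (y $ 2) ^ 2" for t
      unfolding power2_norm_eq_inner by (simp add: inner_vec_def sum_2 L1 L2 power2_eq_square)
    define a where "a = sqrt (R ^ 2 - (y $ 2) ^ 2)"
    have y2R: "(y $ 2) ^ 2 < R ^ 2" using y2 dR R abs_less_sq[of "y $ 2" R] by auto
    hence apos: "a > 0" unfolding a_def by simp
    have a2: "a ^ 2 = R ^ 2 - (y $ 2) ^ 2" unfolding a_def using y2R by simp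
    have Lc: "L t \<in> cball 0 R" if "\<bar>t\<bar> \<le> a" for t
    proof -
      have "t ^ 2 \<le> a ^ 2" using that apos abs_le_square_iff[of t a] by simp
      then have "norm (L t) ^ 2 \<le> R ^ 2" using nL a2 by simp
      then show ?thesis using R abs_le_square_iff[of "norm (L t)" R] by simp
    qed
    have Lb: "L t \<in> ball 0 R" if "\<bar>t\<bar> < a" for t
    proof -
      have "t ^ 2 < a ^ 2" using that apos abs_less_sq[of t a] by simp
      then have "norm (L t) ^ 2 < R ^ 2" using nL a2 by simp
      then show ?thesis using R abs_less_sq[of "norm (L t)" R] by simp
    qed
    have Ls: "L t \<in> sphere 0 R" if "\<bar>t\<bar> = a" for t
    proof -
      have "t ^ 2 = a ^ 2" using that by (metis power2_abs)
      then have "norm (L t) ^ 2 = R ^ 2" using nL a2 by simp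
      then show ?thesis using R by (simp add: power2_eq_iff_nonneg)
    qed
    define g where "g t = u (L t) - y $ 1 * t" for t
    have g0: "g 0 < m0 / 2"
    proof -
      have "u (L 0) \<le> M * \<bar>y $ 2\<bar>"
      proof (cases "y $ 2 = 0")
        case True
        then have "L 0 = 0" unfolding L_def by simp
        then show ?thesis using Mpos by (simp add: u0)
      next
        case False
        define s where "s = \<bar>y $ 2\<bar> / R"
        define p where "p = (R / \<bar>y $ 2\<bar>) *\<^sub>R L 0"
        have "norm (L 0) ^ 2 = \<bar>y $ 2\<bar> ^ 2" using nL[of 0] by simp
        then have nL0: "norm (L 0) = \<bar>y $ 2\<bar>" by (metis power2_eq_iff_nonneg norm_ge_zero abs_ge_zero)
        have ps: "p \<in> sphere 0 R" unfolding p_def using nL0 False R by simp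
        have s01: "s \<in> {0..1}" unfolding s_def using y2 dR R by auto
        have "L 0 = (1 - s) *\<^sub>R 0 + s *\<^sub>R p" unfolding s_def p_def using False R by simp
        then have "u (L 0) \<le> (1 - s) * u 0 + s * u p"
          using convex_onD[OF cvxc, of s 0 p] s01 ps R by auto
        also have "\<dots> = s * u p" by (simp add: u0)
        also have "\<dots> \<le> s * (M * R)" using uMR[OF ps] s01 by (intro mult_left_mono) auto
        also have "\<dots> = M * \<bar>y $ 2\<bar>" unfolding s_def using R by simp
        finally show ?thesis .
      qed
      also have "\<dots> < M * \<delta>" using y2 Mpos by simp
      also have "\<dots> \<le> M * (m0 / (2 * M))" unfolding \<delta>_def using Mpos by (intro mult_left_mono) auto
      also have "\<dots> = m0 / 2" using Mpos by simp
      finally show ?thesis unfolding g_def by simp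
    qed
    have gend: "g t > m0 / 2" if "\<bar>t\<bar> = a" for t
    proof -
      have "y $ 1 * t \<le> \<bar>y $ 1\<bar> * a" using that by (metis abs_ge_self abs_mult)
      also have "\<dots> \<le> \<bar>y $ 1\<bar> * R"
      proof -
        have "\<bar>a\<bar> \<le> \<bar>R\<bar>" unfolding abs_le_square_iff using a2 by simp
        then show ?thesis using apos R by (intro mult_left_mono) auto
      qed
      also have "\<dots> < \<delta> * R" using y1 R by (intro mult_strict_right_mono) auto
      also have "\<dots> \<le> (m0 / (2 * R)) * R" unfolding \<delta>_def using R by (intro mult_right_mono) auto
      also have "\<dots> = m0 / 2" using R by simp
      finally have "y $ 1 * t < m0 / 2" .
      moreover have "m0 \<le> u (L t)" using m0le[OF Ls[OF that]] .
      ultimately show ?thesis unfolding g_def by simp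
    qed
    have contL: "continuous_on {-a..a} L" unfolding L_def by (intro continuous_intros)
    have Lsub: "L ` {-a..a} \<subseteq> cball 0 R" using Lc by auto
    have contg: "continuous_on {-a..a} g" unfolding g_def
      by (intro continuous_intros continuous_on_compose2[OF contu contL Lsub])
    obtain ts where ts: "ts \<in> {-a..a}" and tsmin: "\<And>t. t \<in> {-a..a} \<Longrightarrow> g ts \<le> g t"
      using continuous_attains_inf[OF compact_Icc _ contg] apos by auto
    have "\<bar>ts\<bar> \<noteq> a"
    proof
      assume "\<bar>ts\<bar> = a"
      then have "g ts > m0 / 2" by (rule gend)
      moreover have "g ts \<le> g 0" using tsmin[of 0] apos by simp
      ultimately show False using g0 by simp
    qed
    then have tsa: "\<bar>ts\<bar> < a" using ts by auto
    have tsb: "L ts \<in> ball 0 R" by (rule Lb[OF tsa])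
    have dL: "(L has_derivative (\<lambda>s. s *\<^sub>R axis 1 1)) (at ts)"
      unfolding L_def by (auto intro!: derivative_eq_intros)
    have dg: "(g has_derivative (\<lambda>s. Du (L ts) \<bullet> (s *\<^sub>R axis 1 1) - y $ 1 * s)) (at ts)"
    proof -
      have dU: "((\<lambda>t. u (L t)) has_derivative (\<lambda>s. Du (L ts) \<bullet> (s *\<^sub>R axis 1 1))) (at ts)"
        by (rule has_derivative_compose[OF dL pderiv_Du(1)[OF Du tsb]])
      have dlin: "((\<lambda>t. y $ 1 * t) has_derivative (\<lambda>s. y $ 1 * s)) (at ts)"
        by (auto intro!: derivative_eq_intros)
      show ?thesis unfolding g_def by (rule has_derivative_diff[OF dU dlin])
    qed
    have "eventually (\<lambda>t. t \<in> {-a<..<a}) (at ts)"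
      by (rule eventually_at_in_open') (use tsa in auto)
    then have "eventually (\<lambda>t. g ts \<le> g t) (at ts)"
      by (rule eventually_mono) (auto intro: tsmin)
    then have "(\<lambda>s. Du (L ts) \<bullet> (s *\<^sub>R axis 1 1) - y $ 1 * s) = (\<lambda>h. 0)"
      by (rule has_derivative_local_min[OF dg])
    then have "Du (L ts) \<bullet> (1 *\<^sub>R axis 1 1) - y $ 1 * 1 = 0" by metis
    then have "Du (L ts) $ 1 = y $ 1" by (simp add: inner_axis)
    then have "Pmap Du (L ts) = y"
      by (simp add: Pmap_def vec_eq_iff forall_2 L2)
    then show "y \<in> Pmap Du ` ball 0 R" using tsb by blast
  qed
  show ?thesis unfolding Let_def m0_def[symmetric] M_def[symmetric] \<delta>_def[symmetric]
    using dpos sub by simp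
qed

end
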